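(* Let $(T,s)$ be a signed tree that realizes a set $D$ of integers with $-1\notin D$. If $v$ is a vertex of $T$ with $sdeg(v)<0$, then $v$ is not a pendant vertex and $v$ is not adjacent to a limiting pendant vertex.
   Context: A signed tree is a pair $(T,s)$ where $T$ is a finite tree and $s:E(T)\to\{+,-\}$. The signed degree $sdeg(v)$ of a vertex is the number of incident positive edges minus the number of incident negative edges. $(T,s)$ realizes $D$ if $D=\{sdeg(v):v\in V(T)\}$. A pendant vertex is a vertex of degree $1$. A vertex of a tree $T$ is a limiting pendant vertex if it is an end vertex of some longest path of $T$. *)

theory Defs
  imports Main
begin

definition walk :: "'a set set \<Rightarrow> 'a list \<Rightarrow> bool" where
  "walk E xs \<longleftrightarrow> xs \<noteq> [] \<and> (\<forall>i. Suc i < length xs \<longrightarrow> {xs ! i, xs ! Suc i} \<in> E)"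

definition gpath :: "'a set set \<Rightarrow> 'a list \<Rightarrow> bool" where
  "gpath E xs \<longleftrightarrow> walk E xs \<and> distinct xs"

definition gcycle :: "'a set set \<Rightarrow> 'a list \<Rightarrow> bool" where
  "gcycle E xs \<longleftrightarrow> walk E xs \<and> length xs \<ge> 4 \<and> hd xs = last xs \<and> distinct (tl xs)"

definition is_tree :: "'a set \<Rightarrow> 'a set set \<Rightarrow> bool" where
  "is_tree V E \<longleftrightarrow> finite V \<and> V \<noteq> {} \<and>
     (\<forall>e\<in>E. \<exists>u v. e = {u, v} \<and> u \<in> V \<and> v \<in> V \<and> u \<noteq> v) \<and>
     (\<forall>u\<in>V. \<forall>v\<in>V. \<exists>p. gpath E p \<and> hd p = u \<and> last p = v) \<and>
     (\<nexists>c. gcycle E c)"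

definition degree :: "'a set set \<Rightarrow> 'a \<Rightarrow> nat" where
  "degree E v = card {e \<in> E. v \<in> e}"

text \<open>Signing: s e = True means e is positive, False means negative.\<close>
definition sdeg :: "'a set set \<Rightarrow> ('a set \<Rightarrow> bool) \<Rightarrow> 'a \<Rightarrow> int" where
  "sdeg E s v = int (card {e \<in> E. v \<in> e \<and> s e}) - int (card {e \<in> E. v \<in> e \<and> \<not> s e})"

definition realizes :: "'a set \<Rightarrow> 'a set set \<Rightarrow> ('a set \<Rightarrow> bool) \<Rightarrow> int set \<Rightarrow> bool" where
  "realizes V E s D \<longleftrightarrow> D = sdeg E s ` V"

definition pendant :: "'a set set \<Rightarrow> 'a \<Rightarrow> bool" where
  "pendant E v \<longleftrightarrow> degree E v = 1"

definition longest_path :: "'a set set \<Rightarrow> 'a list \<Rightarrow> bool" where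
  "longest_path E p \<longleftrightarrow> gpath E p \<and> (\<forall>q. gpath E q \<longrightarrow> length q \<le> length p)"

definition limiting_pendant :: "'a set set \<Rightarrow> 'a \<Rightarrow> bool" where
  "limiting_pendant E v \<longleftrightarrow> (\<exists>p. longest_path E p \<and> (v = hd p \<or> v = last p))"

end

theory Submission
  imports Defs
begin

lemma walk_seg:
  assumes "walk E p" "i \<le> j" "j < length p"
  shows "walk E (drop i (take (Suc j) p))"
  using assms unfolding walk_def
  by (auto simp: min_def nth_take nth_drop)

lemma gpath_seg:
  assumes "gpath E p" "i \<le> j" "j < length p"
  shows "gpath E (drop i (take (Suc j) p))"
    "hd (drop i (take (Suc j) p)) = p ! i"
    "last (drop i (take (Suc j) p)) = p ! j"
    "length (drop i (take (Suc j) p)) = Suc j - i"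
  using assms walk_seg[of E p i j] unfolding gpath_def
  apply (auto simp: hd_drop_conv_nth last_conv_nth min_def nth_take nth_drop)
  by (subgoal_tac "j = length p - 1") auto

lemma walk_Cons2: "walk E (a # b # xs) \<longleftrightarrow> {a,b} \<in> E \<and> walk E (b # xs)"
proof
  assume h: "walk E (a # b # xs)"
  have "Suc 0 < length (a # b # xs)" by simp
  then have "{(a # b # xs) ! 0, (a # b # xs) ! Suc 0} \<in> E" using h unfolding walk_def by blast
  then have "{a,b} \<in> E" by simp
  moreover have "walk E (b # xs)" unfolding walk_def
  proof (intro conjI allI impI)
    fix i assume "Suc i < length (b # xs)"
    then have "Suc (Suc i) < length (a # b # xs)" by simp
    then have "{(a # b # xs) ! Suc i, (a # b # xs) ! Suc (Suc i)} \<in> E" using h unfolding walk_def by blast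
    then show "{(b # xs) ! i, (b # xs) ! Suc i} \<in> E" by simp
  qed simp
  ultimately show "{a,b} \<in> E \<and> walk E (b # xs)" ..
next
  assume h: "{a,b} \<in> E \<and> walk E (b # xs)"
  show "walk E (a # b # xs)" unfolding walk_def
  proof (intro conjI allI impI)
    fix i assume i: "Suc i < length (a # b # xs)"
    show "{(a # b # xs) ! i, (a # b # xs) ! Suc i} \<in> E"
    proof (cases i)
      case 0 then show ?thesis using h by simp
    next
      case (Suc k)
      then have "Suc k < length (b # xs)" using i by simp
      then have "{(b # xs) ! k, (b # xs) ! Suc k} \<in> E" using h unfolding walk_def by blast
      then show ?thesis using Suc by simp
    qed
  qed simp
qed

lemma walk_single: "walk E [a]" by (simp add: walk_def)

lemma walk_append1:
  assumes "walk E xs" "{last xs, y} \<in> E"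
  shows "walk E (xs @ [y])"
  unfolding walk_def
proof (intro conjI allI impI)
  fix i assume i: "Suc i < length (xs @ [y])"
  have ne: "xs \<noteq> []" using assms(1) unfolding walk_def by blast
  show "{(xs @ [y]) ! i, (xs @ [y]) ! Suc i} \<in> E"
  proof (cases "Suc i < length xs")
    case True
    then have "{xs ! i, xs ! Suc i} \<in> E" using assms(1) unfolding walk_def by blast
    then show ?thesis using True by (simp add: nth_append)
  next
    case False
    then have ii: "i = length xs - 1" using i by simp
    have "(xs @ [y]) ! i = last xs" using ne ii by (simp add: nth_append last_conv_nth)
    moreover have "(xs @ [y]) ! Suc i = y" using ne ii by (simp add: nth_append)
    ultimately show ?thesis using assms(2) by simp
  qed
qed simp

lemma walk_Cons1:
  assumes "walk E xs" "{y, hd xs} \<in> E"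
  shows "walk E (y # xs)"
  using assms by (cases xs) (simp add: walk_def, simp add: walk_Cons2)

lemma walk_rev:
  assumes "walk E xs" shows "walk E (rev xs)"
  unfolding walk_def
proof (intro conjI allI impI)
  show "rev xs \<noteq> []" using assms unfolding walk_def by simp
  fix i assume i: "Suc i < length (rev xs)"
  define j where "j = length xs - 2 - i"
  have j: "Suc j < length xs" using i unfolding j_def by simp
  then have "{xs ! j, xs ! Suc j} \<in> E" using assms unfolding walk_def by blast
  moreover have "rev xs ! i = xs ! Suc j" using i unfolding j_def by (simp add: rev_nth Suc_diff_Suc)
  moreover have "rev xs ! Suc i = xs ! j" using i unfolding j_def by (simp add: rev_nth)
  ultimately show "{rev xs ! i, rev xs ! Suc i} \<in> E" by (simp add: insert_commute)
qed

lemma cyc: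
  assumes "gpath E q" "length q \<ge> 3" "{last q, hd q} \<in> E"
  shows "gcycle E (q @ [hd q])"
proof -
  have w: "walk E q" and d: "distinct q" using assms(1) unfolding gpath_def by auto
  have "walk E (q @ [hd q])" using walk_append1[OF w assms(3)] .
  moreover obtain a r where q: "q = a # r" using assms(2) by (cases q) auto
  have "distinct (tl (q @ [hd q]))" using d unfolding q by simp
  ultimately show ?thesis using assms(2) unfolding gcycle_def q by simp
qed

lemma sdeg_single:
  assumes "{e \<in> E. w \<in> e} = {e0}"
  shows "sdeg E s w = (if s e0 then 1 else -1)"
proof -
  have a0: "{e \<in> E. w \<in> e \<and> s e} = {e \<in> E. w \<in> e} \<inter> Collect s" by auto
  have b0: "{e \<in> E. w \<in> e \<and> \<not> s e} = {e \<in> E. w \<in> e} - Collect s" by auto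
  have "{e0} - Collect s = (if s e0 then {} else {e0})" by auto
  then show ?thesis unfolding sdeg_def a0 b0 assms by simp
qed

lemma edge_neq:
  assumes "is_tree V E" "{a,b} \<in> E" shows "a \<noteq> b"
  using assms unfolding is_tree_def by (metis doubleton_eq_iff insert_absorb2)

lemma edge_other:
  assumes "is_tree V E" "e \<in> E" "w \<in> e" obtains y where "e = {w,y}"
  using assms unfolding is_tree_def by (metis empty_iff insert_commute insert_iff)

lemma longer:
  assumes "longest_path E p" "gpath E q" "length q > length p" shows False
  using assms unfolding longest_path_def by force

lemma no_cycle: "is_tree V E \<Longrightarrow> \<not> gcycle E c"
  unfolding is_tree_def by blast

lemma edge_sub:
  assumes "is_tree V E" "e \<in> E" shows "e \<subseteq> V"
proof -
  have "\<forall>e\<in>E. \<exists>u v. e = {u, v} \<and> u \<in> V \<and> v \<in> V \<and> u \<noteq> v"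
    using assms(1) by (simp add: is_tree_def)
  then obtain a b where "e = {a,b}" "a \<in> V" "b \<in> V" using assms(2) by blast
  then show ?thesis by simp
qed

lemma key:
  assumes tree: "is_tree V E" and lp: "longest_path E p" and hu: "hd p = u"
    and uv: "{u,v} \<in> E" and wv: "{v,w} \<in> E" and w2: "w = u \<or> w \<noteq> p ! 2"
    and eE: "e \<in> E" and we: "w \<in> e"
  shows "e = {v,w}"
proof -
  have gp: "gpath E p" using lp longest_path_def by blast
  have pne: "p \<noteq> []" using gp unfolding gpath_def walk_def by auto
  have p0: "p ! 0 = u" using hu pne by (simp add: hd_conv_nth)
  have uneqv: "u \<noteq> v" using edge_neq[OF tree uv] .
  have len2: "length p \<ge> 2"
  proof (rule ccontr)
    assume "\<not> ?thesis"
    then have "p = [u]" using pne hu by (cases p; cases "tl p") auto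
    moreover have "gpath E [u,v]" using uv uneqv by (simp add: gpath_def walk_Cons2 walk_def)
    ultimately show False using longer[OF lp] by force
  qed
  have p1: "p ! 1 = v"
  proof (cases "v \<in> set p")
    case False
    have "gpath E (v # p)" using gp False uv hu
      by (auto simp: gpath_def intro!: walk_Cons1 simp: insert_commute)
    then show ?thesis using longer[OF lp] by force
  next
    case True
    then obtain k where k: "k < length p" "p ! k = v" by (metis in_set_conv_nth)
    have "k \<noteq> 0" by (metis k(2) p0 uneqv)
    moreover have "\<not> k \<ge> 2"
    proof
      assume "k \<ge> 2"
      then have "gcycle E (drop 0 (take (Suc k) p) @ [hd (drop 0 (take (Suc k) p))])"
        using gpath_seg[OF gp, of 0 k] k p0 uv by (intro cyc) (auto simp: insert_commute)
      then show False using no_cycle[OF tree] by blast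
    qed
    ultimately have "k = 1" by arith
    then show ?thesis using k by simp
  qed
  obtain y where ey: "e = {w,y}" using edge_other[OF tree eE we] .
  show ?thesis
  proof (rule ccontr)
    assume ne: "e \<noteq> {v,w}"
    then have yv: "y \<noteq> v" using ey by auto
    have yw: "y \<noteq> w" using edge_neq[OF tree] eE ey by auto
    have wnv: "w \<noteq> v" using edge_neq[OF tree wv] by auto
    show False
    proof (cases "w \<in> set p")
      case True
      then obtain j where j: "j < length p" "p ! j = w" by (metis in_set_conv_nth)
      show False
      proof (cases "j = 0")
        case True
        then have wu: "w = u" using j p0 by simp
        show False
        proof (cases "y \<in> set p")
          case False
          have "gpath E (y # p)" using gp False eE ey hu wu
            by (auto simp: gpath_def intro!: walk_Cons1 simp: insert_commute)
          then show False using longer[OF lp] by force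
        next
          case True
          then obtain k where k: "k < length p" "p ! k = y" by (metis in_set_conv_nth)
          have "k \<noteq> 0" by (metis k(2) p0 yw wu)
          moreover have "k \<noteq> 1" using k p1 yv by auto
          ultimately have "k \<ge> 2" by arith
          then have "gcycle E (drop 0 (take (Suc k) p) @ [hd (drop 0 (take (Suc k) p))])"
            using gpath_seg[OF gp, of 0 k] k p0 eE ey wu by (intro cyc) (auto simp: insert_commute)
          then show False using no_cycle[OF tree] by blast
        qed
      next
        case False
        have d: "distinct p" using gp gpath_def by blast
        have "0 < length p" using pne by simp
        then have "p ! j \<noteq> p ! 0" using nth_eq_iff_index_eq[OF d j(1)] False by simp
        then have "w \<noteq> u" using j p0 by simp
        then have "j \<noteq> 2" using j w2 by auto
        moreover have "j \<noteq> 1" using j p1 wnv by auto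
        ultimately have "j \<ge> 3" using False by arith
        then have "gcycle E (drop 1 (take (Suc j) p) @ [hd (drop 1 (take (Suc j) p))])"
          using gpath_seg[OF gp, of 1 j] j p1 wv by (intro cyc) (auto simp: insert_commute)
        then show False using no_cycle[OF tree] by blast
      qed
    next
      case wnp: False
      show False
      proof (cases "y \<in> set p")
        case False
        have tlp: "tl p = drop 1 (take (Suc (length p - 1)) p)" using len2 by (simp add: drop_Suc)
        have wt: "walk E (tl p)" and ht: "hd (tl p) = v" and dt: "distinct (tl p)"
          using gpath_seg[OF gp, of 1 "length p - 1"] len2 p1 unfolding tlp gpath_def by auto
        have "walk E (y # w # tl p)" using wt ht eE ey wv
          by (intro walk_Cons1) (auto simp: insert_commute walk_Cons2)
        moreover have "distinct (y # w # tl p)"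
        proof -
          have "set (tl p) \<subseteq> set p" by (cases p) auto
          then show ?thesis using dt wnp False yw by auto
        qed
        ultimately have "gpath E (y # w # tl p)" by (simp add: gpath_def)
        then show False using longer[OF lp] len2 by force
      next
        case True
        then obtain k where k: "k < length p" "p ! k = y" by (metis in_set_conv_nth)
        have "k \<noteq> 1" using k p1 yv by auto
        show False
        proof (cases "k = 0")
          case True
          have "u \<in> set p" using p0 pne by (metis nth_mem length_greater_0_conv)
          then have "w \<noteq> u" using wnp by auto
          have "gpath E [u,v,w]" using uv wv uneqv wnv \<open>w \<noteq> u\<close>
            by (simp add: gpath_def walk_Cons2 walk_single)
          then have "gcycle E ([u,v,w] @ [hd [u,v,w]])"
            using True k p0 eE ey by (intro cyc) (auto simp: insert_commute)
          then show False using no_cycle[OF tree] by blast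
        next
          case False
          then have k2: "k \<ge> 2" using \<open>k \<noteq> 1\<close> by linarith
          let ?q = "drop 1 (take (Suc k) p)"
          have "gpath E (?q @ [w])"
            using gpath_seg[OF gp, of 1 k] k2 k eE ey wnp
            by (auto simp: gpath_def insert_commute intro!: walk_append1 dest: in_set_dropD in_set_takeD)
          moreover have "?q \<noteq> []" using k2 k by simp
          ultimately have "gcycle E ((?q @ [w]) @ [hd (?q @ [w])])"
            using gpath_seg[OF gp, of 1 k] k2 k wv p1 by (intro cyc) (auto simp: insert_commute)
          then show False using no_cycle[OF tree] by blast
        qed
      qed
    qed
  qed
qed

lemma longest_rev: "longest_path E p \<Longrightarrow> longest_path E (rev p)"
  unfolding longest_path_def gpath_def using walk_rev by fastforce

theorem mainTheorem4:
  fixes V :: "'a set" and E :: "'a set set" and s :: "'a set \<Rightarrow> bool" and D :: "int set"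
  assumes "is_tree V E"
    and "realizes V E s D"
    and "-1 \<notin> D"
    and "v \<in> V"
    and "sdeg E s v < 0"
  shows "\<not> pendant E v \<and> (\<forall>u. {u, v} \<in> E \<longrightarrow> \<not> limiting_pendant E u)"
proof -
  note tree = assms(1)
  have finE: "finite E"
  proof -
    have "E \<subseteq> Pow V" using edge_sub[OF tree] by blast
    moreover have "finite V" using tree by (simp add: is_tree_def)
    ultimately show ?thesis by (meson finite_Pow_iff finite_subset)
  qed
  have inV: "a \<in> V" if "e \<in> E" "a \<in> e" for e a
    using edge_sub[OF tree that(1)] that(2) by blast
  have notm1: "sdeg E s w \<noteq> -1" if "w \<in> V" for w
    using assms(2,3) that unfolding realizes_def by (metis image_eqI)
  have part1: "\<not> pendant E v"
  proof
    assume "pendant E v"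
    then have "card {e \<in> E. v \<in> e} = 1" unfolding pendant_def degree_def .
    then obtain e0 where "{e \<in> E. v \<in> e} = {e0}" by (meson card_1_singletonE)
    then have "sdeg E s v = (if s e0 then 1 else -1)" by (rule sdeg_single)
    then show False using assms(5) notm1[OF assms(4)] by (auto split: if_splits)
  qed
  have part2: "\<not> limiting_pendant E u" if uv: "{u, v} \<in> E" for u
  proof
    assume "limiting_pendant E u"
    then obtain p0 where lp0: "longest_path E p0" and h0: "u = hd p0 \<or> u = last p0"
      unfolding limiting_pendant_def by blast
    obtain p where lp: "longest_path E p" and hu: "hd p = u"
    proof (cases "u = hd p0")
      case True then show ?thesis using that lp0 by simp
    next
      case False
      then have "u = last p0" using h0 by simp
      then have "hd (rev p0) = u" by (simp add: hd_rev)
      then show ?thesis using that longest_rev[OF lp0] by simp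
    qed
    have leafpos: "s {v,w}" if wv: "{v,w} \<in> E" and w2: "w = u \<or> w \<noteq> p ! 2" for w
    proof -
      have "{e \<in> E. w \<in> e} = {{v,w}}"
      proof (intro equalityI subsetI)
        fix e assume "e \<in> {e \<in> E. w \<in> e}"
        then show "e \<in> {{v,w}}" using key[OF tree lp hu uv wv w2, of e] by blast
      next
        fix e assume "e \<in> {{v,w}}"
        then show "e \<in> {e \<in> E. w \<in> e}" using wv by simp
      qed
      then have "sdeg E s w = (if s {v,w} then 1 else -1)" by (rule sdeg_single)
      moreover have "w \<in> V" using inV[OF wv] by auto
      ultimately show ?thesis using notm1 by (auto split: if_splits)
    qed
    have neg: "{e \<in> E. v \<in> e \<and> \<not> s e} \<subseteq> {{v, p ! 2}}"
    proof
      fix e assume e: "e \<in> {e \<in> E. v \<in> e \<and> \<not> s e}"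
      then obtain w where ew: "e = {v,w}" using edge_other[OF tree] by blast
      then show "e \<in> {{v, p ! 2}}" using e leafpos[of w] by auto
    qed
    have pos: "{{u,v}} \<subseteq> {e \<in> E. v \<in> e \<and> s e}"
      using uv leafpos[of u] by (auto simp: insert_commute)
    have "card {e \<in> E. v \<in> e \<and> \<not> s e} \<le> 1"
      using card_mono[OF _ neg] by simp
    moreover have "card {e \<in> E. v \<in> e \<and> s e} \<ge> 1"
      using card_mono[OF _ pos] finE by simp
    ultimately show False using assms(5) unfolding sdeg_def by linarith
  qed
  show ?thesis using part1 part2 by blast
qed

end
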